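(* Let $n\ge 2$ and $\beta\in B_n$. Let $\hat\beta_n$ be the $(n-1)\times(n-1)$ matrix obtained from $\psi_n(\beta)$ by deleting its $n$-th row and $n$-th column. Then in $\Lambda=\mathbb{Z}[t^{\pm1}]$, $$(t^{-n}-1)\det(\hat\beta_n-I_{n-1})=(t^{-1}-1)\det(\psi_n^r(\beta)-I_{n-1}).$$
   Context: $\psi_n\colon B_n\to\mathrm{GL}_n(\Lambda)$ is the unreduced Burau representation: $\psi_n(\sigma_i)=I_{i-1}\oplus U\oplus I_{n-i-1}$ with $U=\left(\begin{smallmatrix}1-t&t\\1&0\end{smallmatrix}\right)$. Let $C_n=\sum_{1\le i\le j\le n}E_{i,j}$ be the upper triangular $n\times n$ matrix with all entries on and above the diagonal equal to $1$. For every $\beta\in B_n$ one has $C_n^{-1}\psi_n(\beta)C_n=\left(\begin{smallmatrix}\psi_n^r(\beta)&0_{n-1}\\ *_\beta&1\end{smallmatrix}\right)$ with $0_{n-1}$ a zero column, $*_\beta$ a row of length $n-1$, and $\psi_n^r(\beta)\in\mathrm{GL}_{n-1}(\Lambda)$; the map $\psi_n^r$ is the reduced Burau representation. $I_k$ is the $k\times k$ identity matrix. *)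

theory Defs
  imports "HOL-Computational_Algebra.Formal_Laurent_Series" "Jordan_Normal_Form.Determinant"
begin

(* Lambda = Z[t,t^-1] is realised inside the ring of integer formal Laurent series
   (an injective ring embedding), with t = fls_X and t^-1 = fls_X_inv. *)
type_synonym laurent = "int fls"

abbreviation tt :: laurent where "tt \<equiv> fls_X"
abbreviation tinv :: laurent where "tinv \<equiv> fls_X_inv"

(* A braid letter (i, True) stands for sigma_i, (i, False) for sigma_i^-1  (1 <= i <= n-1).
   Every braid in B_n is represented by such a word. *)
type_synonym braid_word = "(nat \<times> bool) list"

definition braid_word_ok :: "nat \<Rightarrow> braid_word \<Rightarrow> bool" where
  "braid_word_ok n w \<longleftrightarrow> (\<forall>(i, e) \<in> set w. 1 \<le> i \<and> i \<le> n - 1)"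

(* psi_n(sigma_i) = I_{i-1} (+) U (+) I_{n-i-1}, U = [[1-t, t],[1, 0]];
   psi_n(sigma_i^-1) = I_{i-1} (+) U^-1 (+) I_{n-i-1}, U^-1 = [[0, 1],[t^-1, 1-t^-1]].
   Matrix indices are 0-based, so U occupies rows/cols i-1, i. *)
definition burau_gen :: "nat \<Rightarrow> nat \<times> bool \<Rightarrow> laurent mat" where
  "burau_gen n l = (case l of (i, e) \<Rightarrow>
     mat n n (\<lambda>(a, b).
       if a = i - 1 \<and> b = i - 1 then (if e then 1 - tt else 0)
       else if a = i - 1 \<and> b = i then (if e then tt else 1)
       else if a = i \<and> b = i - 1 then (if e then 1 else tinv)
       else if a = i \<and> b = i then (if e then 0 else 1 - tinv)
       else if a = b then 1 else 0))"

definition burau :: "nat \<Rightarrow> braid_word \<Rightarrow> laurent mat" where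
  "burau n w = foldr (\<lambda>l M. burau_gen n l * M) w (1\<^sub>m n)"

definition C_mat :: "nat \<Rightarrow> laurent mat" where
  "C_mat n = mat n n (\<lambda>(i, j). if i \<le> j then 1 else 0)"

definition C_inv :: "nat \<Rightarrow> laurent mat" where
  "C_inv n = mat n n (\<lambda>(i, j). if i = j then 1 else if j = i + 1 then -1 else 0)"

definition burau_reduced :: "nat \<Rightarrow> braid_word \<Rightarrow> laurent mat" where
  "burau_reduced n w = (let M = C_inv n * burau n w * C_mat n in
     mat (n - 1) (n - 1) (\<lambda>(i, j). M $$ (i, j)))"

definition delete_last :: "nat \<Rightarrow> laurent mat \<Rightarrow> laurent mat" where
  "delete_last n M = mat (n - 1) (n - 1) (\<lambda>(i, j). M $$ (i, j))"

end

theory Submission imports Defs begin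

lemma tt_tinv: "tt * tinv = 1"
  by (simp add: fls_X_inv_times_conv_shift fls_X_conv_shift_1 fls_shifted_times_simps)

lemma mult_entry:
  assumes "A \<in> carrier_mat nr k" "B \<in> carrier_mat k nc" "i < nr" "j < nc"
  shows "(A * B) $$ (i, j) = (\<Sum>c<k. A $$ (i, c) * B $$ (c, j))"
  using assms by (simp add: scalar_prod_def atLeast0LessThan)

lemma sum_one:
  fixes f :: "nat \<Rightarrow> 'a::comm_monoid_add"
  assumes "p < n" "\<And>a. a < n \<Longrightarrow> a \<noteq> p \<Longrightarrow> f a = 0"
  shows "(\<Sum>a<n. f a) = f p"
proof -
  have "(\<Sum>a<n. f a) = (\<Sum>a\<in>{p}. f a)"
    using assms by (intro sum.mono_neutral_right) auto
  thus ?thesis by simp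
qed

lemma sum_two:
  fixes f :: "nat \<Rightarrow> 'a::comm_monoid_add"
  assumes "p < n" "q < n" "p \<noteq> q" "\<And>a. a < n \<Longrightarrow> a \<noteq> p \<Longrightarrow> a \<noteq> q \<Longrightarrow> f a = 0"
  shows "(\<Sum>a<n. f a) = f p + f q"
proof -
  have "(\<Sum>a<n. f a) = (\<Sum>a\<in>{p,q}. f a)"
    using assms by (intro sum.mono_neutral_right) auto
  thus ?thesis using assms(3) by simp
qed

lemma gen_carrier: "burau_gen n l \<in> carrier_mat n n"
  by (simp add: burau_gen_def split: prod.splits)

lemma gen_left:
  assumes "1 \<le> i" "i \<le> n - 1" "k < n"
  shows "(\<Sum>a<n. tt ^ a * burau_gen n (i, e) $$ (a, k)) = tt ^ k"
proof -
  obtain j where j: "i = Suc j" using assms(1) by (cases i) auto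
  have jn: "Suc j < n" using assms j by auto
  have G: "\<And>a. a < n \<Longrightarrow> burau_gen n (i, e) $$ (a, k) =
       (if a = j \<and> k = j then (if e then 1 - tt else 0)
       else if a = j \<and> k = Suc j then (if e then tt else 1)
       else if a = Suc j \<and> k = j then (if e then 1 else tinv)
       else if a = Suc j \<and> k = Suc j then (if e then 0 else 1 - tinv)
       else if a = k then 1 else 0)"
    using assms j by (simp add: burau_gen_def)
  consider "k = j" | "k = Suc j" | "k \<noteq> j \<and> k \<noteq> Suc j" by blast
  then show ?thesis
  proof cases
    case 1
    have "(\<Sum>a<n. tt ^ a * burau_gen n (i, e) $$ (a, k)) =
       tt ^ j * burau_gen n (i, e) $$ (j, k) + tt ^ Suc j * burau_gen n (i, e) $$ (Suc j, k)"
      by (rule sum_two) (use jn 1 G in auto)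
    also have "\<dots> = tt ^ k" using 1 jn G
      by (cases e) (simp_all add: algebra_simps power_Suc2 mult.assoc tt_tinv)
    finally show ?thesis .
  next
    case 2
    have "(\<Sum>a<n. tt ^ a * burau_gen n (i, e) $$ (a, k)) =
       tt ^ j * burau_gen n (i, e) $$ (j, k) + tt ^ Suc j * burau_gen n (i, e) $$ (Suc j, k)"
      by (rule sum_two) (use jn 2 G in auto)
    also have "\<dots> = tt ^ k" using 2 jn G
      by (cases e) (simp_all add: algebra_simps power_Suc2 mult.assoc tt_tinv)
    finally show ?thesis .
  next
    case 3
    have "(\<Sum>a<n. tt ^ a * burau_gen n (i, e) $$ (a, k)) = tt ^ k * burau_gen n (i, e) $$ (k, k)"
      by (rule sum_one) (use assms 3 G in auto)
    also have "\<dots> = tt ^ k" using 3 assms G by auto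
    finally show ?thesis .
  qed
qed

lemma gen_right:
  assumes "1 \<le> i" "i \<le> n - 1" "a < n"
  shows "(\<Sum>b<n. burau_gen n (i, e) $$ (a, b)) = 1"
proof -
  obtain j where j: "i = Suc j" using assms(1) by (cases i) auto
  have jn: "Suc j < n" using assms j by auto
  have G: "\<And>k. k < n \<Longrightarrow> burau_gen n (i, e) $$ (a, k) =
       (if a = j \<and> k = j then (if e then 1 - tt else 0)
       else if a = j \<and> k = Suc j then (if e then tt else 1)
       else if a = Suc j \<and> k = j then (if e then 1 else tinv)
       else if a = Suc j \<and> k = Suc j then (if e then 0 else 1 - tinv)
       else if a = k then 1 else 0)"
    using assms j by (simp add: burau_gen_def)
  consider "a = j" | "a = Suc j" | "a \<noteq> j \<and> a \<noteq> Suc j" by blast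
  then show ?thesis
  proof cases
    case 1
    have "(\<Sum>b<n. burau_gen n (i, e) $$ (a, b)) =
       burau_gen n (i, e) $$ (a, j) + burau_gen n (i, e) $$ (a, Suc j)"
      by (rule sum_two) (use jn 1 G in auto)
    also have "\<dots> = 1" using 1 jn G by auto
    finally show ?thesis .
  next
    case 2
    have "(\<Sum>b<n. burau_gen n (i, e) $$ (a, b)) =
       burau_gen n (i, e) $$ (a, j) + burau_gen n (i, e) $$ (a, Suc j)"
      by (rule sum_two) (use jn 2 G in auto)
    also have "\<dots> = 1" using 2 jn G by auto
    finally show ?thesis .
  next
    case 3
    have "(\<Sum>b<n. burau_gen n (i, e) $$ (a, b)) = burau_gen n (i, e) $$ (a, a)"
      by (rule sum_one) (use assms 3 G in auto)
    also have "\<dots> = 1" using 3 assms G by auto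
    finally show ?thesis .
  qed
qed

lemma burau_props:
  assumes "braid_word_ok n w"
  shows "burau n w \<in> carrier_mat n n
    \<and> (\<forall>k<n. (\<Sum>a<n. tt ^ a * burau n w $$ (a, k)) = tt ^ k)
    \<and> (\<forall>a<n. (\<Sum>b<n. burau n w $$ (a, b)) = 1)"
  using assms
proof (induction w)
  case Nil
  have L: "(\<Sum>a<n. tt ^ a * 1\<^sub>m n $$ (a, k)) = tt ^ k" if "k < n" for k
    by (subst sum_one[of k]) (use that in auto)
  have R: "(\<Sum>b<n. 1\<^sub>m n $$ (a, b)) = (1::laurent)" if "a < n" for a
    by (subst sum_one[of a]) (use that in auto)
  show ?case using L R by (simp add: burau_def)
next
  case (Cons l w)
  obtain i e where l: "l = (i, e)" by (cases l)
  have ok: "braid_word_ok n w" and i: "1 \<le> i" "i \<le> n - 1"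
    using Cons.prems l by (auto simp: braid_word_ok_def)
  note IH = Cons.IH[OF ok]
  let ?G = "burau_gen n (i, e)" and ?M = "burau n w"
  have M: "?M \<in> carrier_mat n n" using IH by blast
  have bw: "burau n (l # w) = ?G * ?M" using l by (simp add: burau_def)
  have G: "?G \<in> carrier_mat n n" by (rule gen_carrier)
  have ent: "(?G * ?M) $$ (a, b) = (\<Sum>c<n. ?G $$ (a, c) * ?M $$ (c, b))" if "a < n" "b < n" for a b
    using mult_entry[OF G M that] .
  have L: "(\<Sum>a<n. tt ^ a * (?G * ?M) $$ (a, k)) = tt ^ k" if k: "k < n" for k
  proof -
    have "(\<Sum>a<n. tt ^ a * (?G * ?M) $$ (a, k)) = (\<Sum>a<n. \<Sum>c<n. tt ^ a * ?G $$ (a, c) * ?M $$ (c, k))"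
      using k by (simp add: ent sum_distrib_left mult.assoc)
    also have "\<dots> = (\<Sum>c<n. (\<Sum>a<n. tt ^ a * ?G $$ (a, c)) * ?M $$ (c, k))"
      by (subst sum.swap) (simp add: sum_distrib_right)
    also have "\<dots> = (\<Sum>c<n. tt ^ c * ?M $$ (c, k))"
      using gen_left[OF i] by simp
    also have "\<dots> = tt ^ k" using IH k by blast
    finally show ?thesis .
  qed
  have R: "(\<Sum>b<n. (?G * ?M) $$ (a, b)) = 1" if a: "a < n" for a
  proof -
    have "(\<Sum>b<n. (?G * ?M) $$ (a, b)) = (\<Sum>b<n. \<Sum>c<n. ?G $$ (a, c) * ?M $$ (c, b))"
      using a by (simp add: ent)
    also have "\<dots> = (\<Sum>c<n. ?G $$ (a, c) * (\<Sum>b<n. ?M $$ (c, b)))"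
      by (subst sum.swap) (simp add: sum_distrib_left)
    also have "\<dots> = (\<Sum>c<n. ?G $$ (a, c))"
      using IH by simp
    also have "\<dots> = 1" using gen_right[OF i a] .
    finally show ?thesis .
  qed
  show ?case using L R G M bw by simp
qed

lemma key:
  fixes A :: "'a::comm_ring_1 mat" and v u :: "nat \<Rightarrow> 'a"
  assumes A: "A \<in> carrier_mat (Suc m) (Suc m)" and vm: "v m = 1"
   and vA: "\<And>j. j < Suc m \<Longrightarrow> (\<Sum>i<Suc m. v i * A $$ (i, j)) = 0"
  shows "det (mat (Suc m) (Suc m) (\<lambda>(i, j). A $$ (i, j) + (if j = m then u i else 0)))
     = (\<Sum>i<Suc m. v i * u i) * det (mat m m (\<lambda>(i, j). A $$ (i, j)))"
proof -
  define n where "n = Suc m"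
  define P where "P = mat n n (\<lambda>(i, j). A $$ (i, j) + (if j = m then u i else 0))"
  define E where "E = mat n n (\<lambda>(i, j). if i = m then v j else if i = j then 1 else (0::'a))"
  define s where "s = (\<Sum>i<n. v i * u i)"
  have P: "P \<in> carrier_mat n n" and E: "E \<in> carrier_mat n n" by (auto simp: P_def E_def)
  have dE: "det E = 1"
  proof -
    have "det E = prod_list (diag_mat E)"
      by (rule det_lower_triangular[OF _ E]) (auto simp: E_def n_def)
    also have "diag_mat E = map (\<lambda>_. 1) [0..<n]"
      by (auto simp: diag_mat_def E_def n_def vm)
    also have "prod_list (map (\<lambda>_. 1::'a) [0..<n]) = 1"
      by (induct n) auto
    finally show ?thesis .
  qed
  have ent: "(E * P) $$ (i, j) = (if i = m then (if j = m then s else 0) else P $$ (i, j))"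
    if ij: "i < n" "j < n" for i j
  proof -
    have e: "(E * P) $$ (i, j) = (\<Sum>c<n. E $$ (i, c) * P $$ (c, j))"
      by (rule mult_entry[OF E P ij])
    show ?thesis
    proof (cases "i = m")
      case True
      have "(\<Sum>c<n. E $$ (i, c) * P $$ (c, j)) = (\<Sum>c<n. v c * A $$ (c, j) + (if j = m then v c * u c else 0))"
        using True ij by (intro sum.cong) (auto simp: E_def P_def algebra_simps)
      also have "\<dots> = (if j = m then s else 0)"
        using vA[of j] ij by (simp add: sum.distrib s_def n_def)
      finally show ?thesis using e True by simp
    next
      case False
      have "(\<Sum>c<n. E $$ (i, c) * P $$ (c, j)) = E $$ (i, i) * P $$ (i, j)"
        by (rule sum_one) (use ij False in \<open>auto simp: E_def\<close>)
      thus ?thesis using e False ij by (simp add: E_def)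
    qed
  qed
  have EP: "E * P \<in> carrier_mat n n" using E P by simp
  have "det (E * P) = (\<Sum>j<n. (E * P) $$ (m, j) * cofactor (E * P) m j)"
    by (rule laplace_expansion_row[OF EP]) (simp add: n_def)
  also have "\<dots> = (E * P) $$ (m, m) * cofactor (E * P) m m"
    by (rule sum_one) (auto simp: ent n_def)
  also have "mat_delete (E * P) m m = mat m m (\<lambda>(i, j). A $$ (i, j))"
  proof (rule eq_matI)
    fix i j assume ij: "i < dim_row (mat m m (\<lambda>(i, j). A $$ (i, j)))" "j < dim_col (mat m m (\<lambda>(i, j). A $$ (i, j)))"
    hence ij': "i < m" "j < m" by auto
    have "mat_delete (E * P) m m $$ (i, j) = (E * P) $$ (i, j)"
      using ij' EP unfolding mat_delete_def by (simp add: n_def del: index_mult_mat)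
    also have "\<dots> = P $$ (i, j)" using ij' by (simp add: ent n_def del: index_mult_mat)
    also have "\<dots> = A $$ (i, j)" using ij' by (simp add: P_def n_def)
    finally show "mat_delete (E * P) m m $$ (i, j) = mat m m (\<lambda>(i, j). A $$ (i, j)) $$ (i, j)"
      using ij' by simp
  qed (use EP in \<open>auto simp: n_def\<close>)
  hence "cofactor (E * P) m m = det (mat m m (\<lambda>(i, j). A $$ (i, j)))"
    by (simp add: cofactor_def)
  finally have "det (E * P) = s * det (mat m m (\<lambda>(i, j). A $$ (i, j)))"
    by (simp add: ent n_def)
  moreover have "det (E * P) = det P" using det_mult[OF E P] dE by simp
  ultimately show ?thesis by (simp add: P_def s_def n_def)
qed

lemma C_inv_carrier: "C_inv n \<in> carrier_mat n n" by (simp add: C_inv_def)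
lemma C_mat_carrier: "C_mat n \<in> carrier_mat n n" by (simp add: C_mat_def)

lemma C_inv_mult:
  assumes X: "X \<in> carrier_mat n k" and i: "i < n" and j: "j < k"
  shows "(C_inv n * X) $$ (i, j) = X $$ (i, j) - (if Suc i < n then X $$ (Suc i, j) else 0)"
proof -
  have e: "(C_inv n * X) $$ (i, j) = (\<Sum>c<n. C_inv n $$ (i, c) * X $$ (c, j))"
    by (rule mult_entry[OF C_inv_carrier X i j])
  show ?thesis
  proof (cases "Suc i < n")
    case True
    have "(\<Sum>c<n. C_inv n $$ (i, c) * X $$ (c, j)) = C_inv n $$ (i, i) * X $$ (i, j) + C_inv n $$ (i, Suc i) * X $$ (Suc i, j)"
      by (rule sum_two) (use i True in \<open>auto simp: C_inv_def\<close>)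
    thus ?thesis using e True i by (simp add: C_inv_def)
  next
    case False
    have "(\<Sum>c<n. C_inv n $$ (i, c) * X $$ (c, j)) = C_inv n $$ (i, i) * X $$ (i, j)"
      by (rule sum_one) (use i False in \<open>auto simp: C_inv_def\<close>)
    thus ?thesis using e False i by (simp add: C_inv_def)
  qed
qed

lemma mult_C:
  assumes X: "X \<in> carrier_mat nr n" and i: "i < nr" and j: "j < n"
  shows "(X * C_mat n) $$ (i, j) = (\<Sum>c<Suc j. X $$ (i, c))"
proof -
  have "(X * C_mat n) $$ (i, j) = (\<Sum>c<n. X $$ (i, c) * C_mat n $$ (c, j))"
    by (rule mult_entry[OF X C_mat_carrier i j])
  also have "\<dots> = (\<Sum>c<Suc j. X $$ (i, c) * C_mat n $$ (c, j))"
    using j by (intro sum.mono_neutral_right) (auto simp: C_mat_def)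
  also have "\<dots> = (\<Sum>c<Suc j. X $$ (i, c))"
    by (rule sum.cong) (use j in \<open>auto simp: C_mat_def\<close>)
  finally show ?thesis .
qed

lemma det_C_inv: "det (C_inv n :: laurent mat) = 1"
proof -
  have "det (C_inv n :: laurent mat) = prod_list (diag_mat (C_inv n))"
    by (rule det_upper_triangular[OF _ C_inv_carrier]) (auto simp: C_inv_def upper_triangular_def)
  also have "diag_mat (C_inv n :: laurent mat) = map (\<lambda>_. 1) [0..<n]"
    by (auto simp: diag_mat_def C_inv_def)
  also have "prod_list (map (\<lambda>_. 1::laurent) [0..<n]) = 1" by (induct n) auto
  finally show ?thesis .
qed

lemma det_C_mat: "det (C_mat n :: laurent mat) = 1"
proof -
  have "det (C_mat n :: laurent mat) = prod_list (diag_mat (C_mat n))"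
    by (rule det_upper_triangular[OF _ C_mat_carrier]) (auto simp: C_mat_def upper_triangular_def)
  also have "diag_mat (C_mat n :: laurent mat) = map (\<lambda>_. 1) [0..<n]"
    by (auto simp: diag_mat_def C_mat_def)
  also have "prod_list (map (\<lambda>_. 1::laurent) [0..<n]) = 1" by (induct n) auto
  finally show ?thesis .
qed

lemma C_inv_C: "C_inv n * C_mat n = (1\<^sub>m n :: laurent mat)"
proof (rule eq_matI)
  fix i j assume "i < dim_row (1\<^sub>m n :: laurent mat)" "j < dim_col (1\<^sub>m n :: laurent mat)"
  hence ij: "i < n" "j < n" by auto
  show "(C_inv n * C_mat n) $$ (i, j) = (1\<^sub>m n :: laurent mat) $$ (i, j)"
    using C_inv_mult[OF C_mat_carrier ij] ij by (auto simp: C_mat_def)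
qed (auto simp: C_inv_def C_mat_def)

lemma tinv_tt: "tinv * tt = 1" using tt_tinv by (simp add: mult.commute)

lemma pw: "tinv ^ k * tt ^ k = 1"
proof -
  have "tinv ^ k * tt ^ k = (tinv * tt) ^ k" by (simp add: power_mult_distrib)
  thus ?thesis by (simp add: tinv_tt)
qed

lemma geom: "(tinv - 1) * (\<Sum>i<Suc m. tinv ^ m * tt ^ i) = tinv ^ Suc m - 1"
proof (induction m)
  case 0
  then show ?case by simp
next
  case (Suc m)
  have u: "tinv ^ Suc m * tt ^ Suc m = 1" by (rule pw)
  have h: "(\<Sum>i<Suc (Suc m). tinv ^ Suc m * tt ^ i) = tinv * (\<Sum>i<Suc m. tinv ^ m * tt ^ i) + 1"
    by (simp only: sum.lessThan_Suc[of _ "Suc m"] u) (simp add: sum_distrib_left mult.assoc distrib_left)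
  show ?case unfolding h using Suc.IH by (simp add: algebra_simps)
qed

theorem lemma2:
  fixes n :: nat and w :: braid_word
  assumes "n \<ge> 2" and "braid_word_ok n w"
  shows "(tinv ^ n - 1) * det (delete_last n (burau n w) - 1\<^sub>m (n - 1))
       = (tinv - 1) * det (burau_reduced n w - 1\<^sub>m (n - 1))"
proof -
  obtain m where n: "n = Suc m" and m1: "1 \<le> m" using assms(1) by (cases n) auto
  define B where "B = burau n w"
  have B: "B \<in> carrier_mat n n"
   and BL: "\<And>k. k < n \<Longrightarrow> (\<Sum>a<n. tt ^ a * B $$ (a, k)) = tt ^ k"
   and BR: "\<And>a. a < n \<Longrightarrow> (\<Sum>b<n. B $$ (a, b)) = 1"
    using burau_props[OF assms(2)] unfolding B_def by auto
  define N where "N = B - 1\<^sub>m n"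
  have N: "N \<in> carrier_mat n n" using B by (simp add: N_def minus_carrier_mat)
  have Nent: "\<And>i j. i < n \<Longrightarrow> j < n \<Longrightarrow> N $$ (i, j) = B $$ (i, j) - (if i = j then 1 else 0)"
    using B by (auto simp: N_def)
  define X where "X = det (mat m m (\<lambda>(i, j). N $$ (i, j)))"
  have hX: "delete_last n B - 1\<^sub>m (n - 1) = mat m m (\<lambda>(i, j). N $$ (i, j))"
    by (rule eq_matI) (auto simp: delete_last_def Nent n)
  define v where "v i = tinv ^ m * tt ^ i" for i
  have vm: "v m = 1" by (simp add: v_def pw)
  have vN: "(\<Sum>i<Suc m. v i * N $$ (i, j)) = 0" if j: "j < Suc m" for j
  proof -
    have "(\<Sum>i<Suc m. v i * N $$ (i, j)) = (\<Sum>i<n. tinv ^ m * (tt ^ i * B $$ (i, j)) - tinv ^ m * (tt ^ i * (if i = j then 1 else 0)))"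
      using j n by (intro sum.cong) (auto simp: v_def Nent algebra_simps)
    also have "\<dots> = tinv ^ m * (\<Sum>i<n. tt ^ i * B $$ (i, j)) - tinv ^ m * (\<Sum>i<n. tt ^ i * (if i = j then 1 else 0))"
      by (simp add: sum_subtractf sum_distrib_left)
    also have "(\<Sum>i<n. tt ^ i * (if i = j then 1 else 0)) = tt ^ j * (if j = j then 1 else 0)"
      by (rule sum_one) (use j n in auto)
    finally show ?thesis using BL[of j] j n by simp
  qed
  define P1 where "P1 = mat (Suc m) (Suc m) (\<lambda>(i, j). N $$ (i, j) + (if j = m then 1 else 0))"
  have P1: "P1 \<in> carrier_mat n n" by (simp add: P1_def n)
  have keyres: "det P1 = (\<Sum>i<Suc m. v i * 1) * X"
    unfolding X_def P1_def
    using key[of N m v "\<lambda>_. 1", OF _ vm vN] N n by simp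
  define NC where "NC = N * C_mat n"
  define D where "D = C_inv n * NC"
  have NC: "NC \<in> carrier_mat n n" using N by (simp add: NC_def C_mat_carrier)
  have D: "D \<in> carrier_mat n n" using NC C_inv_carrier[of n] unfolding D_def by (rule mult_carrier_mat[rotated])
  have NCent: "NC $$ (a, j) = (\<Sum>c<Suc j. N $$ (a, c))" if "a < n" "j < n" for a j
    unfolding NC_def by (rule mult_C[OF N that])
  have NCm: "NC $$ (a, m) = 0" if a: "a < n" for a
  proof -
    have "NC $$ (a, m) = (\<Sum>c<n. B $$ (a, c) - (if a = c then 1 else 0))"
      using a n by (simp add: NCent Nent)
    also have "\<dots> = (\<Sum>c<n. B $$ (a, c)) - (\<Sum>c<n. (if a = c then 1 else 0))"
      by (simp add: sum_subtractf)
    also have "\<dots> = 0" using BR[OF a] a by simp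
    finally show ?thesis .
  qed
  have Dent: "D $$ (i, j) = NC $$ (i, j) - (if Suc i < n then NC $$ (Suc i, j) else 0)"
    if "i < n" "j < n" for i j
    unfolding D_def by (rule C_inv_mult[OF NC that])
  have Dm: "D $$ (i, m) = 0" if "i < n" for i
    using that n by (simp add: Dent NCm)
  have C: "C_mat n \<in> carrier_mat n n" and Ci: "C_inv n \<in> carrier_mat n n"
    by (rule C_mat_carrier, rule C_inv_carrier)
  have Dmat: "D = C_inv n * B * C_mat n - 1\<^sub>m n"
  proof -
    have "D = C_inv n * ((B - 1\<^sub>m n) * C_mat n)" by (simp add: D_def NC_def N_def)
    also have "(B - 1\<^sub>m n) * C_mat n = B * C_mat n - 1\<^sub>m n * C_mat n"
      by (rule minus_mult_distrib_mat[OF B one_carrier_mat C])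
    also have "C_inv n * (B * C_mat n - 1\<^sub>m n * C_mat n) = C_inv n * (B * C_mat n) - C_inv n * (1\<^sub>m n * C_mat n)"
      by (rule mult_minus_distrib_mat[OF Ci]) (use B C in auto)
    also have "C_inv n * (B * C_mat n) = C_inv n * B * C_mat n"
      using Ci B C by (simp add: assoc_mult_mat)
    also have "C_inv n * (1\<^sub>m n * C_mat n) = 1\<^sub>m n"
      using C by (simp add: C_inv_C)
    finally show ?thesis .
  qed
  have red: "burau_reduced n w - 1\<^sub>m (n - 1) = mat m m (\<lambda>(i, j). D $$ (i, j))"
  proof (rule eq_matI)
    fix i j assume "i < dim_row (mat m m (\<lambda>(i, j). D $$ (i, j)))" "j < dim_col (mat m m (\<lambda>(i, j). D $$ (i, j)))"
    hence ij: "i < m" "j < m" by auto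
    have "(C_inv n * B * C_mat n - 1\<^sub>m n) $$ (i, j) = (C_inv n * B * C_mat n) $$ (i, j) - 1\<^sub>m n $$ (i, j)"
      using ij n Ci B C by (simp del: index_mult_mat)
    thus "(burau_reduced n w - 1\<^sub>m (n - 1)) $$ (i, j) = mat m m (\<lambda>(i, j). D $$ (i, j)) $$ (i, j)"
      using ij n unfolding Dmat by (simp add: burau_reduced_def Let_def B_def del: index_mult_mat)
  qed (auto simp: burau_reduced_def Let_def n)
  define D' where "D' = mat n n (\<lambda>(i, j). D $$ (i, j) + (if i = m \<and> j = m then 1 else 0))"
  have D': "D' \<in> carrier_mat n n" by (simp add: D'_def)
  have dD': "det D' = det (mat m m (\<lambda>(i, j). D $$ (i, j)))"
  proof -
    have "det D' = (\<Sum>i<n. D' $$ (i, m) * cofactor D' i m)"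
      by (rule laplace_expansion_column[OF D']) (simp add: n)
    also have "\<dots> = D' $$ (m, m) * cofactor D' m m"
      by (rule sum_one) (auto simp: n D'_def Dm)
    also have "mat_delete D' m m = mat m m (\<lambda>(i, j). D $$ (i, j))"
      by (rule eq_matI) (auto simp: mat_delete_def D'_def n)
    hence "cofactor D' m m = det (mat m m (\<lambda>(i, j). D $$ (i, j)))"
      by (simp add: cofactor_def)
    finally show ?thesis by (simp add: D'_def n Dm)
  qed
  have D'eq: "D' = C_inv n * (P1 * C_mat n)"
  proof (rule eq_matI)
    fix i j assume "i < dim_row (C_inv n * (P1 * C_mat n))" "j < dim_col (C_inv n * (P1 * C_mat n))"
    hence ij: "i < n" "j < n" using Ci C by auto
    have PC: "P1 * C_mat n \<in> carrier_mat n n" using P1 C by simp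
    have PCe: "(P1 * C_mat n) $$ (a, j) = NC $$ (a, j) + (if j = m then 1 else 0)" if a: "a < n" for a
    proof -
      have "(P1 * C_mat n) $$ (a, j) = (\<Sum>c<Suc j. P1 $$ (a, c))" by (rule mult_C[OF P1 a ij(2)])
      also have "\<dots> = (\<Sum>c<Suc j. N $$ (a, c) + (if c = m then 1 else 0))"
        using a ij n by (intro sum.cong) (auto simp: P1_def)
      also have "\<dots> = NC $$ (a, j) + (if j = m then 1 else 0)"
        using a ij n by (simp add: sum.distrib NCent)
      finally show ?thesis .
    qed
    show "D' $$ (i, j) = (C_inv n * (P1 * C_mat n)) $$ (i, j)"
    proof -
      have e: "(C_inv n * (P1 * C_mat n)) $$ (i, j) = (P1 * C_mat n) $$ (i, j) - (if Suc i < n then (P1 * C_mat n) $$ (Suc i, j) else 0)"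
        by (rule C_inv_mult[OF PC ij])
      have s: "Suc i < n \<longleftrightarrow> i \<noteq> m" using ij n by auto
      have "D' $$ (i, j) = D $$ (i, j) + (if i = m \<and> j = m then 1 else 0)" using ij by (simp add: D'_def)
      also have "\<dots> = (C_inv n * (P1 * C_mat n)) $$ (i, j)"
        unfolding e Dent[OF ij] using PCe[OF ij(1)] PCe[of "Suc i"] s by auto
      finally show ?thesis .
    qed
  qed (use Ci C in \<open>auto simp: D'_def\<close>)
  have "det D' = det P1"
    unfolding D'eq using det_mult[OF Ci, of "P1 * C_mat n"] det_mult[OF P1 C] P1 C
    by (simp add: det_C_inv det_C_mat)
  hence Y: "det (burau_reduced n w - 1\<^sub>m (n - 1)) = (\<Sum>i<Suc m. v i) * X"
    using red dD' keyres by simp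
  have "(tinv - 1) * ((\<Sum>i<Suc m. v i) * X) = ((tinv - 1) * (\<Sum>i<Suc m. tinv ^ m * tt ^ i)) * X"
    by (simp add: v_def mult.assoc)
  also have "\<dots> = (tinv ^ n - 1) * X" using geom[of m] n by simp
  finally have fin: "(tinv ^ n - 1) * X = (tinv - 1) * ((\<Sum>i<Suc m. v i) * X)" by (rule sym)
  show ?thesis
    unfolding Y B_def[symmetric] hX X_def[symmetric] by (rule fin)
qed

end
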